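(* Let $\lambda_1>\lambda_2>\lambda_3>0$ and $D=\mathrm{diag}(\lambda_1,\lambda_2,\lambda_3)$. Then: (i) The rotation $\mathrm{diag}(-1,-1,1)$ is the unique global maximum of $\widetilde W_{1,0}(\cdot;D)$ on $SO(3)$. (ii) If $\lambda_1+\lambda_2>2$, the global minima of $\widetilde W_{1,0}(\cdot;D)$ on $SO(3)$ are exactly the two rotations $$\begin{pmatrix}c & \mp\sqrt{1-c^2} & 0\\ \pm\sqrt{1-c^2} & c & 0\\ 0&0&1\end{pmatrix},\qquad c=\frac{2}{\lambda_1+\lambda_2},$$ with minimal value $(\lambda_3-1)^2+\frac12(\lambda_1-\lambda_2)^2$. (iii) If $\lambda_1+\lambda_2\le2$, then $\mathbb I_3$ is the unique global minimum of $\widetilde W_{1,0}(\cdot;D)$ on $SO(3)$.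
   Context: $\mathrm{sym}(Y)=\tfrac12(Y+Y^T)$, $\|Y\|^2=\mathrm{tr}(Y^TY)$ (Frobenius norm). $\widetilde W_{1,0}(R;D)=\|\mathrm{sym}(R^TD-\mathbb I_3)\|^2$ for $R\in SO(3)$. *)

theory Defs
  imports "HOL-Analysis.Analysis"
begin

type_synonym mat3 = "real^3^3"

definition SO3 :: "mat3 set" where
  "SO3 = {R. orthogonal_matrix R \<and> det R = 1}"

definition sym_part :: "mat3 \<Rightarrow> mat3" where
  "sym_part Y = (1/2) *\<^sub>R (Y + transpose Y)"

definition frob_sq :: "mat3 \<Rightarrow> real" where
  "frob_sq Y = trace (transpose Y ** Y)"

definition W10 :: "mat3 \<Rightarrow> mat3 \<Rightarrow> real" where
  "W10 R D = frob_sq (sym_part (transpose R ** D - mat 1))"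

definition diag3 :: "real \<Rightarrow> real \<Rightarrow> real \<Rightarrow> mat3" where
  "diag3 a b c = vector [vector [a, 0, 0], vector [0, b, 0], vector [0, 0, c]]"

definition rot3 :: "real \<Rightarrow> real \<Rightarrow> mat3" where
  "rot3 c s = vector [vector [c, -s, 0], vector [s, c, 0], vector [0, 0, 1]]"

end

theory Submission
  imports Defs
begin

definition Phi :: "real \<Rightarrow> real \<Rightarrow> real \<Rightarrow> real \<Rightarrow> real \<Rightarrow> real \<Rightarrow> real" where
 "Phi l1 l2 l3 t1 t2 t3 = (l1*t1 - 1)^2 + (l2*t2 - 1)^2 + (l3*t3 - 1)^2
   + (1/4) * ((l1^2+l2^2)*(1+t3^2-t1^2-t2^2) + 4*l1*l2*(t1*t2-t3))
   + (1/4) * ((l1^2+l3^2)*(1+t2^2-t1^2-t3^2) + 4*l1*l3*(t1*t3-t2))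
   + (1/4) * ((l2^2+l3^2)*(1+t1^2-t2^2-t3^2) + 4*l2*l3*(t2*t3-t1))"

lemma id_ii:
  fixes a b c d l1 l2 l3 :: real
  assumes "a+b+c+d = 1"
  shows "Phi l1 l2 l3 (a+b-c-d) (a-b+c-d) (a-b-c+d) - ((l3 - 1)^2 + (1/2) * (l1 - l2)^2)
   = (1/2)*((l1+l2)*(a-d) - 2 - (2*l3-l1+l2)*b - (2*l3+l1-l2)*c)^2 + 2*(l1-l3)*(l2+l3)*b + 2*(l2-l3)*(l1+l3)*c"
proof -
  have a: "a = 1-b-c-d" using assms by simp
  show ?thesis unfolding a Phi_def by (simp add: power2_eq_square algebra_simps)
qed

lemma id_iii:
  fixes a b c d l1 l2 l3 :: real
  assumes "a+b+c+d = 1"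
  shows "Phi l1 l2 l3 (a+b-c-d) (a-b+c-d) (a-b-c+d) - ((l1-1)^2+(l2-1)^2+(l3 - 1)^2)
   = 2*(l2+l3)*(2-(l2+l3))*b + 2*(l1+l3)*(2-(l1+l3))*c + 2*(l1+l2)*(2-(l1+l2))*d
     + 2*(b^2*(l2+l3)^2 + c^2*(l1+l3)^2 + d^2*(l1+l2)^2 + b*c*((l1+l3)^2+(l2+l3)^2-(l1-l2)^2)
        + b*d*((l2+l3)^2+(l1+l2)^2-(l1-l3)^2) + c*d*((l1+l3)^2+(l1+l2)^2-(l2-l3)^2))"
proof -
  have a: "a = 1-b-c-d" using assms by simp
  show ?thesis unfolding a Phi_def by (simp add: power2_eq_square algebra_simps)
qed

lemma id_i:
  fixes a b c d l1 l2 l3 :: real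
  assumes "a+b+c+d = 1"
  shows "((l1+1)^2+(l2+1)^2+(l3 - 1)^2) - Phi l1 l2 l3 (a+b-c-d) (a-b+c-d) (a-b-c+d)
   = 4*(l1+l2)*a + 4*(l1-l3)*b + 4*(l2-l3)*c
     + 2*(b*c*(l1-l2)^2 + a*d*(l1+l2)^2 + a*c*(l1+l3)^2 + b*d*(l1-l3)^2 + a*b*(l2+l3)^2 + c*d*(l2-l3)^2)"
proof -
  have a: "a = 1-b-c-d" using assms by simp
  show ?thesis unfolding a Phi_def by (simp add: power2_eq_square algebra_simps)
qed

lemma cof3:
  fixes r11 r12 r13 r21 r22 r23 r31 r32 r33 :: real
  assumes n1: "r11^2+r12^2+r13^2 = 1" and n2: "r21^2+r22^2+r23^2 = 1" and n3: "r31^2+r32^2+r33^2 = 1"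
    and o12: "r11*r21+r12*r22+r13*r23 = 0"
    and dt: "r11*r22*r33 + r12*r23*r31 + r13*r21*r32 - r11*r23*r32 - r12*r21*r33 - r13*r22*r31 = 1"
  shows "r33 = r11*r22 - r12*r21"
proof -
  have e: "(r31 - (r12*r23-r13*r22))^2 + (r32 - (r13*r21-r11*r23))^2 + (r33 - (r11*r22-r12*r21))^2
     = (r31^2+r32^2+r33^2) - 2*(r11*r22*r33 + r12*r23*r31 + r13*r21*r32 - r11*r23*r32 - r12*r21*r33 - r13*r22*r31)
       + ((r11^2+r12^2+r13^2)*(r21^2+r22^2+r23^2) - (r11*r21+r12*r22+r13*r23)^2)"
    by (simp add: power2_eq_square algebra_simps)
  hence "(r31 - (r12*r23-r13*r22))^2 + (r32 - (r13*r21-r11*r23))^2 + (r33 - (r11*r22-r12*r21))^2 = 0"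
    using n1 n2 n3 o12 dt by simp
  hence "(r33 - (r11*r22-r12*r21))^2 = 0"
    by (smt (verit) zero_le_power2)
  thus ?thesis by simp
qed

lemma alg9:
  fixes r11 r12 r13 r21 r22 r23 r31 r32 r33 l1 l2 l3 :: real
  assumes n1: "r11^2+r12^2+r13^2 = 1" and n2: "r21^2+r22^2+r23^2 = 1" and n3: "r31^2+r32^2+r33^2 = 1"
    and c1: "r11^2+r21^2+r31^2 = 1" and c2: "r12^2+r22^2+r32^2 = 1" and c3: "r13^2+r23^2+r33^2 = 1"
    and o12: "r11*r21+r12*r22+r13*r23 = 0" and o13: "r11*r31+r12*r32+r13*r33 = 0"
    and o23: "r21*r31+r22*r32+r23*r33 = 0"
    and dt: "r11*r22*r33 + r12*r23*r31 + r13*r21*r32 - r11*r23*r32 - r12*r21*r33 - r13*r22*r31 = 1"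
  shows "(l1 * r11 - 1)^2 + (l2 * r22 - 1)^2 + (l3 * r33 - 1)^2
     + (1/2) * (l2 * r21 + l1 * r12)^2
     + (1/2) * (l3 * r31 + l1 * r13)^2
     + (1/2) * (l3 * r32 + l2 * r23)^2 = Phi l1 l2 l3 r11 r22 r33"
   and "(r12 - r21)^2 = (1+r11+r22+r33)*(1-r11-r22+r33)"
   and "(r12 + r21)^2 = (1+r11-r22-r33)*(1-r11+r22-r33)"
   and "(r13 - r31)^2 = (1+r11+r22+r33)*(1-r11+r22-r33)"
   and "(r13 + r31)^2 = (1+r11-r22-r33)*(1-r11-r22+r33)"
   and "(r23 - r32)^2 = (1+r11+r22+r33)*(1+r11-r22-r33)"
   and "(r23 + r32)^2 = (1-r11+r22-r33)*(1-r11-r22+r33)"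
proof -
  have P1: "r12*r21 = r11*r22 - r33" using cof3[OF n1 n2 n3 o12 dt] by simp
  have P3: "r23*r32 = r22*r33 - r11"
    using cof3[of r22 r23 r21 r32 r33 r31 r12 r13 r11] n1 n2 n3 o23 dt
    by (simp add: algebra_simps)
  have P2: "r13*r31 = r11*r33 - r22"
    using cof3[of r33 r31 r32 r13 r11 r12 r23 r21 r22] n1 n2 n3 o13 dt
    by (simp add: algebra_simps)
  define s where "s = r12^2 - r21^2"
  have A1: "r12^2 + r21^2 = 1 + r33^2 - r11^2 - r22^2" using n1 n2 c3 by linarith
  have A2: "r13^2 + r31^2 = 1 + r22^2 - r11^2 - r33^2" using n1 n3 c2 by linarith
  have A3: "r23^2 + r32^2 = 1 + r11^2 - r22^2 - r33^2" using n2 n3 c1 by linarith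
  have s12: "r12^2 = ((1 + r33^2 - r11^2 - r22^2) + s)/2" using A1 s_def by simp
  have s21: "r21^2 = ((1 + r33^2 - r11^2 - r22^2) - s)/2" using A1 s_def by simp
  have s13: "r13^2 = ((1 + r22^2 - r11^2 - r33^2) - s)/2" using A2 s_def n1 c1 by simp
  have s31: "r31^2 = ((1 + r22^2 - r11^2 - r33^2) + s)/2" using A2 s_def n1 c1 by simp
  have s23: "r23^2 = ((1 + r11^2 - r22^2 - r33^2) + s)/2" using A3 s_def n2 c2 by simp
  have s32: "r32^2 = ((1 + r11^2 - r22^2 - r33^2) - s)/2" using A3 s_def n2 c2 by simp
  have q1: "(l2 * r21 + l1 * r12)^2 = l2^2*r21^2 + l1^2*r12^2 + 2*l1*l2*(r12*r21)"
    by (simp add: power2_eq_square algebra_simps)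
  have q2: "(l3 * r31 + l1 * r13)^2 = l3^2*r31^2 + l1^2*r13^2 + 2*l1*l3*(r13*r31)"
    by (simp add: power2_eq_square algebra_simps)
  have q3: "(l3 * r32 + l2 * r23)^2 = l3^2*r32^2 + l2^2*r23^2 + 2*l2*l3*(r23*r32)"
    by (simp add: power2_eq_square algebra_simps)
  show "(l1 * r11 - 1)^2 + (l2 * r22 - 1)^2 + (l3 * r33 - 1)^2
     + (1/2) * (l2 * r21 + l1 * r12)^2
     + (1/2) * (l3 * r31 + l1 * r13)^2
     + (1/2) * (l3 * r32 + l2 * r23)^2 = Phi l1 l2 l3 r11 r22 r33"
    unfolding q1 q2 q3 s12 s21 s13 s31 s23 s32 P1 P2 P3 Phi_def
    by (simp add: power2_eq_square field_simps)
  have sq: "\<And>x y::real. (x - y)^2 = x^2 + y^2 - 2*(x*y)" "\<And>x y::real. (x + y)^2 = x^2 + y^2 + 2*(x*y)"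
    by (simp_all add: power2_eq_square algebra_simps)
  show "(r12 - r21)^2 = (1+r11+r22+r33)*(1-r11-r22+r33)"
    unfolding sq A1 P1 by (simp add: power2_eq_square algebra_simps)
  show "(r12 + r21)^2 = (1+r11-r22-r33)*(1-r11+r22-r33)"
    unfolding sq A1 P1 by (simp add: power2_eq_square algebra_simps)
  show "(r13 - r31)^2 = (1+r11+r22+r33)*(1-r11+r22-r33)"
    unfolding sq A2 P2 by (simp add: power2_eq_square algebra_simps)
  show "(r13 + r31)^2 = (1+r11-r22-r33)*(1-r11-r22+r33)"
    unfolding sq A2 P2 by (simp add: power2_eq_square algebra_simps)
  show "(r23 - r32)^2 = (1+r11+r22+r33)*(1+r11-r22-r33)"
    unfolding sq A3 P3 by (simp add: power2_eq_square algebra_simps)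
  show "(r23 + r32)^2 = (1-r11+r22-r33)*(1-r11-r22+r33)"
    unfolding sq A3 P3 by (simp add: power2_eq_square algebra_simps)
qed

lemma W10_expl:
  "W10 R (diag3 l1 l2 l3) =
     (l1 * R$1$1 - 1)^2 + (l2 * R$2$2 - 1)^2 + (l3 * R$3$3 - 1)^2
     + (1/2) * (l2 * R$2$1 + l1 * R$1$2)^2
     + (1/2) * (l3 * R$3$1 + l1 * R$1$3)^2
     + (1/2) * (l3 * R$3$2 + l2 * R$2$3)^2"
  unfolding W10_def frob_sq_def sym_part_def diag3_def
  by (simp add: trace_def sum_3 matrix_matrix_mult_def transpose_def mat_def
       power2_eq_square algebra_simps)

lemma SO3_entries:
  "R \<in> SO3 \<longleftrightarrow>
   (\<forall>i j. (\<Sum>k\<in>UNIV. R$k$i * R$k$j) = (if i = j then 1 else 0)) \<and>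
   (\<forall>i j. (\<Sum>k\<in>UNIV. R$i$k * R$j$k) = (if i = j then 1 else 0)) \<and> det R = 1"
  unfolding SO3_def orthogonal_matrix_def
  by (simp add: vec_eq_iff matrix_matrix_mult_def transpose_def mat_def)

lemma SO3_eqs:
  fixes R :: mat3
  assumes "R \<in> SO3"
  shows "(R$1$1)^2+(R$1$2)^2+(R$1$3)^2 = 1" "(R$2$1)^2+(R$2$2)^2+(R$2$3)^2 = 1"
    "(R$3$1)^2+(R$3$2)^2+(R$3$3)^2 = 1"
    "(R$1$1)^2+(R$2$1)^2+(R$3$1)^2 = 1" "(R$1$2)^2+(R$2$2)^2+(R$3$2)^2 = 1"
    "(R$1$3)^2+(R$2$3)^2+(R$3$3)^2 = 1"
    "R$1$1*R$2$1+R$1$2*R$2$2+R$1$3*R$2$3 = 0" "R$1$1*R$3$1+R$1$2*R$3$2+R$1$3*R$3$3 = 0"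
    "R$2$1*R$3$1+R$2$2*R$3$2+R$2$3*R$3$3 = 0"
    "R$1$1*R$2$2*R$3$3 + R$1$2*R$2$3*R$3$1 + R$1$3*R$2$1*R$3$2 - R$1$1*R$2$3*R$3$2 - R$1$2*R$2$1*R$3$3 - R$1$3*R$2$2*R$3$1 = 1"
proof -
  have c: "\<And>i j. (\<Sum>k\<in>UNIV. R$k$i * R$k$j) = (if i = j then 1 else 0)"
   and r: "\<And>i j. (\<Sum>k\<in>UNIV. R$i$k * R$j$k) = (if i = j then 1 else 0)"
   and d: "det R = 1" using assms unfolding SO3_entries by blast+
  show "(R$1$1)^2+(R$1$2)^2+(R$1$3)^2 = 1" using r[of 1 1] by (simp add: sum_3 power2_eq_square)
  show "(R$2$1)^2+(R$2$2)^2+(R$2$3)^2 = 1" using r[of 2 2] by (simp add: sum_3 power2_eq_square)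
  show "(R$3$1)^2+(R$3$2)^2+(R$3$3)^2 = 1" using r[of 3 3] by (simp add: sum_3 power2_eq_square)
  show "(R$1$1)^2+(R$2$1)^2+(R$3$1)^2 = 1" using c[of 1 1] by (simp add: sum_3 power2_eq_square)
  show "(R$1$2)^2+(R$2$2)^2+(R$3$2)^2 = 1" using c[of 2 2] by (simp add: sum_3 power2_eq_square)
  show "(R$1$3)^2+(R$2$3)^2+(R$3$3)^2 = 1" using c[of 3 3] by (simp add: sum_3 power2_eq_square)
  show "R$1$1*R$2$1+R$1$2*R$2$2+R$1$3*R$2$3 = 0" using r[of 1 2] by (simp add: sum_3)
  show "R$1$1*R$3$1+R$1$2*R$3$2+R$1$3*R$3$3 = 0" using r[of 1 3] by (simp add: sum_3)
  show "R$2$1*R$3$1+R$2$2*R$3$2+R$2$3*R$3$3 = 0" using r[of 2 3] by (simp add: sum_3)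
  show "R$1$1*R$2$2*R$3$3 + R$1$2*R$2$3*R$3$1 + R$1$3*R$2$1*R$3$2 - R$1$1*R$2$3*R$3$2 - R$1$2*R$2$1*R$3$3 - R$1$3*R$2$2*R$3$1 = 1"
    using d by (simp add: det_3)
qed

lemma four_nonneg:
  fixes a b c d :: real
  assumes "a+b+c+d > 0" "0 \<le> a*b" "0 \<le> a*c" "0 \<le> a*d" "0 \<le> b*c" "0 \<le> b*d" "0 \<le> c*d"
  shows "0 \<le> a" "0 \<le> b" "0 \<le> c" "0 \<le> d"
  using assms by (auto simp: zero_le_mult_iff)

lemma core:
  fixes R :: mat3
  assumes "R \<in> SO3"
  obtains qa qb qc qd where "qa \<ge> 0" "qb \<ge> 0" "qc \<ge> 0" "qd \<ge> 0" "qa+qb+qc+qd = 1"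
    "R$1$1 = qa+qb-qc-qd" "R$2$2 = qa-qb+qc-qd" "R$3$3 = qa-qb-qc+qd"
    "\<And>l1 l2 l3. W10 R (diag3 l1 l2 l3) = Phi l1 l2 l3 (qa+qb-qc-qd) (qa-qb+qc-qd) (qa-qb-qc+qd)"
proof -
  note E = SO3_eqs[OF assms]
  note A = alg9[OF E]
  define qa where "qa = (1+R$1$1+R$2$2+R$3$3)/4"
  define qb where "qb = (1+R$1$1-R$2$2-R$3$3)/4"
  define qc where "qc = (1-R$1$1+R$2$2-R$3$3)/4"
  define qd where "qd = (1-R$1$1-R$2$2+R$3$3)/4"
  have t: "R$1$1 = qa+qb-qc-qd" "R$2$2 = qa-qb+qc-qd" "R$3$3 = qa-qb-qc+qd" "qa+qb+qc+qd = 1"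
    unfolding qa_def qb_def qc_def qd_def by (auto simp: field_simps)
  have e4: "4*qa = 1+R$1$1+R$2$2+R$3$3" "4*qb = 1+R$1$1-R$2$2-R$3$3"
    "4*qc = 1-R$1$1+R$2$2-R$3$3" "4*qd = 1-R$1$1-R$2$2+R$3$3"
    unfolding qa_def qb_def qc_def qd_def by simp_all
  have p: "0 \<le> (4*qa)*(4*qb)" "0 \<le> (4*qa)*(4*qc)" "0 \<le> (4*qa)*(4*qd)" "0 \<le> (4*qb)*(4*qc)"
    "0 \<le> (4*qb)*(4*qd)" "0 \<le> (4*qc)*(4*qd)"
    unfolding e4
    using A(6) apply (metis zero_le_power2)
    using A(4) apply (metis zero_le_power2)
    using A(2) apply (metis zero_le_power2)
    using A(3) apply (metis zero_le_power2)
    using A(5) apply (metis zero_le_power2)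
    using A(7) apply (metis zero_le_power2)
    done
  have s: "(4*qa)+(4*qb)+(4*qc)+(4*qd) > 0" using t by simp
  have nn: "0 \<le> 4*qa" "0 \<le> 4*qb" "0 \<le> 4*qc" "0 \<le> 4*qd" using four_nonneg[OF s p] by auto
  show ?thesis
    apply (rule that[of qa qb qc qd])
    using nn t apply simp_all
    using A(1) t by (simp add: W10_expl)
qed

lemma recon:
  fixes R :: mat3
  assumes "R \<in> SO3" "R$1$1 = x" "R$2$2 = x" "R$3$3 = 1"
  shows "R = rot3 x (R$2$1)" "(R$2$1)^2 = 1 - x^2"
proof -
  note E = SO3_eqs[OF assms(1)]
  note A = alg9[OF E]
  have "(R$3$1)^2 + (R$3$2)^2 = 0" using E(3) assms by simp
  hence z1: "R$3$1 = 0" "R$3$2 = 0" by (simp_all add: sum_power2_eq_zero_iff)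
  have "(R$1$3)^2 + (R$2$3)^2 = 0" using E(6) assms by simp
  hence z2: "R$1$3 = 0" "R$2$3 = 0" by (simp_all add: sum_power2_eq_zero_iff)
  have "(R$1$2 + R$2$1)^2 = 0" using A(3) assms by simp
  hence z3: "R$1$2 = - R$2$1" by simp
  show "(R$2$1)^2 = 1 - x^2" using E(4) assms z1 by simp
  show "R = rot3 x (R$2$1)"
    unfolding rot3_def vec_eq_iff forall_3 using assms z1 z2 z3 by simp
qed

lemma rot3_SO3:
  assumes "s^2 = 1 - c^2"
  shows "rot3 c s \<in> SO3"
proof -
  have h: "c * c + s * s = 1" using assms by (simp add: power2_eq_square)
  show ?thesis
    unfolding SO3_entries forall_3 rot3_def
    using h by (simp add: sum_3 det_3 algebra_simps)
qed

lemma W_Phi: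
  assumes "R \<in> SO3"
  shows "W10 R (diag3 l1 l2 l3) = Phi l1 l2 l3 (R$1$1) (R$2$2) (R$3$3)"
proof -
  obtain qa qb qc qd where q: "R$1$1 = qa+qb-qc-qd" "R$2$2 = qa-qb+qc-qd" "R$3$3 = qa-qb-qc+qd"
    "\<And>l1 l2 l3. W10 R (diag3 l1 l2 l3) = Phi l1 l2 l3 (qa+qb-qc-qd) (qa-qb+qc-qd) (qa-qb-qc+qd)"
    using core[OF assms] by metis
  show ?thesis using q by simp
qed

theorem mainTheorem9:
  fixes l1 l2 l3 :: real
  assumes "l1 > l2" and "l2 > l3" and "l3 > 0"
  defines "D \<equiv> diag3 l1 l2 l3"
  shows "(diag3 (-1) (-1) 1 \<in> SO3 \<and>
          (\<forall>R\<in>SO3. R \<noteq> diag3 (-1) (-1) 1 \<longrightarrow> W10 R D < W10 (diag3 (-1) (-1) 1) D))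
       \<and> (l1 + l2 > 2 \<longrightarrow>
          (let c = 2 / (l1 + l2) in
            {R \<in> SO3. \<forall>Q\<in>SO3. W10 R D \<le> W10 Q D}
              = {rot3 c (sqrt (1 - c^2)), rot3 c (- sqrt (1 - c^2))}
          \<and> (\<forall>R\<in>SO3. (\<forall>Q\<in>SO3. W10 R D \<le> W10 Q D) \<longrightarrow>
                W10 R D = (l3 - 1)^2 + (1/2) * (l1 - l2)^2)))
       \<and> (l1 + l2 \<le> 2 \<longrightarrow> {R \<in> SO3. \<forall>Q\<in>SO3. W10 R D \<le> W10 Q D} = {mat 1})"
proof -
  note lp = assms(1-3)
  define M where "M = diag3 (-1) (-1) 1"
  have Mr: "M = rot3 (-1) 0"
    unfolding M_def diag3_def rot3_def vec_eq_iff forall_3 by simp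
  have MSO: "M \<in> SO3" unfolding Mr by (rule rot3_SO3) simp
  define Wmax where "Wmax = (l1+1)^2+(l2+1)^2+(l3 - 1)^2"
  have WM: "W10 M D = Wmax"
  proof -
    have "W10 M D = Phi l1 l2 l3 (-1) (-1) 1"
      unfolding D_def W_Phi[OF MSO] unfolding Mr rot3_def by simp
    also have "\<dots> = Wmax"
      using id_i[of 0 0 0 1 l1 l2 l3] unfolding Wmax_def by simp
    finally show ?thesis .
  qed
  have part1: "\<forall>R\<in>SO3. R \<noteq> M \<longrightarrow> W10 R D < W10 M D"
  proof (intro ballI impI)
    fix R assume R: "R \<in> SO3" "R \<noteq> M"
    obtain qa qb qc qd where q: "qa \<ge> 0" "qb \<ge> 0" "qc \<ge> 0" "qd \<ge> 0" "qa+qb+qc+qd = 1"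
      "R$1$1 = qa+qb-qc-qd" "R$2$2 = qa-qb+qc-qd" "R$3$3 = qa-qb-qc+qd"
      "W10 R D = Phi l1 l2 l3 (qa+qb-qc-qd) (qa-qb+qc-qd) (qa-qb-qc+qd)"
      using core[OF R(1)] unfolding D_def by metis
    have idn: "Wmax - W10 R D = 4*(l1+l2)*qa + 4*(l1-l3)*qb + 4*(l2-l3)*qc
     + 2*(qb*qc*(l1-l2)^2 + qa*qd*(l1+l2)^2 + qa*qc*(l1+l3)^2 + qb*qd*(l1-l3)^2 + qa*qb*(l2+l3)^2 + qc*qd*(l2-l3)^2)"
      unfolding q(9) Wmax_def using id_i[OF q(5)] by simp
    have Qn: "0 \<le> 2*(qb*qc*(l1-l2)^2 + qa*qd*(l1+l2)^2 + qa*qc*(l1+l3)^2 + qb*qd*(l1-l3)^2 + qa*qb*(l2+l3)^2 + qc*qd*(l2-l3)^2)"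
      using q(1-4) by (intro mult_nonneg_nonneg add_nonneg_nonneg) auto
    have "\<not> (qa = 0 \<and> qb = 0 \<and> qc = 0)"
    proof
      assume z: "qa = 0 \<and> qb = 0 \<and> qc = 0"
      hence "qd = 1" using q(5) by simp
      hence d: "R$1$1 = -1" "R$2$2 = -1" "R$3$3 = 1" using q(6-8) z by simp_all
      have "R = rot3 (-1) (R$2$1)" "(R$2$1)^2 = 1 - (-1)^2" using recon[OF R(1) d] by simp_all
      hence "R = M" unfolding Mr by simp
      with R(2) show False by simp
    qed
    hence "0 < 4*(l1+l2)*qa + 4*(l1-l3)*qb + 4*(l2-l3)*qc"
    proof -
      have a1: "0 \<le> 4*(l1+l2)*qa" "0 \<le> 4*(l1-l3)*qb" "0 \<le> 4*(l2-l3)*qc"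
        using q(1-3) lp by simp_all
      have "0 < 4*(l1+l2)*qa \<or> 0 < 4*(l1-l3)*qb \<or> 0 < 4*(l2-l3)*qc"
        using \<open>\<not> (qa = 0 \<and> qb = 0 \<and> qc = 0)\<close> q(1-3) lp by (auto simp: less_le)
      thus ?thesis using a1 by linarith
    qed
    thus "W10 R D < W10 M D" using idn Qn WM by linarith
  qed
  have part2: "l1 + l2 > 2 \<longrightarrow>
          (let c = 2 / (l1 + l2) in
            {R \<in> SO3. \<forall>Q\<in>SO3. W10 R D \<le> W10 Q D}
              = {rot3 c (sqrt (1 - c^2)), rot3 c (- sqrt (1 - c^2))}
          \<and> (\<forall>R\<in>SO3. (\<forall>Q\<in>SO3. W10 R D \<le> W10 Q D) \<longrightarrow>
                W10 R D = (l3 - 1)^2 + (1/2) * (l1 - l2)^2))"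
  proof
    assume sg: "l1 + l2 > 2"
    define k where "k = 2 / (l1+l2)"
    have k01: "0 < k" "k < 1" unfolding k_def using sg by (simp_all add: field_simps)
    have snz: "l1+l2 \<noteq> 0" using sg by simp
    have ks: "(l1+l2)*k = 2" unfolding k_def using snz by (simp add: field_simps)
    define Wmin where "Wmin = (l3 - 1)^2 + (1/2) * (l1 - l2)^2"
    define r1 where "r1 = rot3 k (sqrt (1 - k^2))"
    define r2 where "r2 = rot3 k (- sqrt (1 - k^2))"
    have kk: "0 \<le> 1 - k^2" using k01 by (simp add: power_le_one)
    have r1SO: "r1 \<in> SO3" unfolding r1_def by (rule rot3_SO3) (use kk in simp)
    have r2SO: "r2 \<in> SO3" unfolding r2_def by (rule rot3_SO3) (use kk in simp)
    have Wrot: "W10 (rot3 k s) D = Wmin" if "rot3 k s \<in> SO3" for s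
    proof -
      have "W10 (rot3 k s) D = Phi l1 l2 l3 k k 1"
        unfolding D_def W_Phi[OF that] unfolding rot3_def by simp
      also have "\<dots> = Wmin"
      proof -
        have e: "(1+k)/2 + 0 - 0 - (1-k)/2 = k" "(1+k)/2 - 0 + 0 - (1-k)/2 = k"
          "(1+k)/2 - 0 - 0 + (1-k)/2 = 1" "(1+k)/2 + 0 + 0 + (1-k)/2 = 1" by (simp_all add: field_simps)
        have "(l1+l2)*((1+k)/2 - (1-k)/2) - 2 = 0" using ks by (simp add: field_simps)
        thus ?thesis using id_ii[OF e(4), of l1 l2 l3] unfolding e(1-3) Wmin_def by simp
      qed
      finally show ?thesis .
    qed
    have lower: "Wmin \<le> W10 R D \<and> (W10 R D = Wmin \<longrightarrow> R = r1 \<or> R = r2)" if R: "R \<in> SO3" for R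
    proof -
      obtain qa qb qc qd where q: "qa \<ge> 0" "qb \<ge> 0" "qc \<ge> 0" "qd \<ge> 0" "qa+qb+qc+qd = 1"
        "R$1$1 = qa+qb-qc-qd" "R$2$2 = qa-qb+qc-qd" "R$3$3 = qa-qb-qc+qd"
        "W10 R D = Phi l1 l2 l3 (qa+qb-qc-qd) (qa-qb+qc-qd) (qa-qb-qc+qd)"
        using core[OF R] unfolding D_def by metis
      define X where "X = (l1+l2)*(qa-qd) - 2 - (2*l3-l1+l2)*qb - (2*l3+l1-l2)*qc"
      have idn: "W10 R D - Wmin = (1/2)*X^2 + 2*(l1-l3)*(l2+l3)*qb + 2*(l2-l3)*(l1+l3)*qc"
        unfolding q(9) Wmin_def X_def using id_ii[OF q(5)] by simp
      have t1: "0 \<le> 2*(l1-l3)*(l2+l3)*qb" "0 \<le> 2*(l2-l3)*(l1+l3)*qc"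
        using lp q(2,3) by simp_all
      have "0 \<le> (1/2)*X^2" by simp
      hence ge: "Wmin \<le> W10 R D" using idn t1 by linarith
      moreover have "R = r1 \<or> R = r2" if eq: "W10 R D = Wmin"
      proof -
        have z: "X^2 = 0" "2*(l1-l3)*(l2+l3)*qb = 0" "2*(l2-l3)*(l1+l3)*qc = 0"
          using idn t1 eq \<open>0 \<le> (1/2)*X^2\<close> by linarith+
        have zb: "qb = 0" "qc = 0" using z(2,3) lp by auto
        have "X = 0" using z(1) by simp
        hence "(l1+l2)*(qa-qd) = 2" unfolding X_def using zb by simp
        hence "qa - qd = k" unfolding k_def using snz by (simp add: field_simps)
        hence d: "R$1$1 = k" "R$2$2 = k" "R$3$3 = 1" using q(5-8) zb by simp_all
        note rc = recon[OF R d]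
        have "sqrt ((R$2$1)^2) = sqrt (1-k^2)" using rc(2) by simp
        hence "\<bar>R$2$1\<bar> = sqrt (1-k^2)" by simp
        hence "R$2$1 = sqrt (1-k^2) \<or> R$2$1 = - sqrt (1-k^2)" by (auto simp: abs_if split: if_splits)
        thus ?thesis using rc(1) unfolding r1_def r2_def by metis
      qed
      ultimately show ?thesis by blast
    qed
    have set: "{R \<in> SO3. \<forall>Q\<in>SO3. W10 R D \<le> W10 Q D} = {r1, r2}"
    proof
      show "{R \<in> SO3. \<forall>Q\<in>SO3. W10 R D \<le> W10 Q D} \<subseteq> {r1, r2}"
      proof
        fix R assume "R \<in> {R \<in> SO3. \<forall>Q\<in>SO3. W10 R D \<le> W10 Q D}"
        hence R: "R \<in> SO3" "W10 R D \<le> W10 r1 D" using r1SO by auto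
        have "W10 R D = Wmin" using R lower[OF R(1)] Wrot[OF r1SO[unfolded r1_def]]
          unfolding r1_def by linarith
        thus "R \<in> {r1, r2}" using lower[OF R(1)] by blast
      qed
      show "{r1, r2} \<subseteq> {R \<in> SO3. \<forall>Q\<in>SO3. W10 R D \<le> W10 Q D}"
      proof -
        have "W10 r1 D = Wmin" using Wrot[OF r1SO[unfolded r1_def]] unfolding r1_def .
        moreover have "W10 r2 D = Wmin" using Wrot[OF r2SO[unfolded r2_def]] unfolding r2_def .
        moreover have "\<forall>Q\<in>SO3. Wmin \<le> W10 Q D" using lower by blast
        ultimately show ?thesis using r1SO r2SO by simp
      qed
    qed
    have val: "\<forall>R\<in>SO3. (\<forall>Q\<in>SO3. W10 R D \<le> W10 Q D) \<longrightarrow> W10 R D = Wmin"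
    proof (intro ballI impI)
      fix R assume R: "R \<in> SO3" "\<forall>Q\<in>SO3. W10 R D \<le> W10 Q D"
      hence "W10 R D \<le> W10 r1 D" using r1SO by auto
      thus "W10 R D = Wmin" using lower[OF R(1)] Wrot[OF r1SO[unfolded r1_def]]
        unfolding r1_def by linarith
    qed
    show "let c = 2 / (l1 + l2) in
            {R \<in> SO3. \<forall>Q\<in>SO3. W10 R D \<le> W10 Q D}
              = {rot3 c (sqrt (1 - c^2)), rot3 c (- sqrt (1 - c^2))}
          \<and> (\<forall>R\<in>SO3. (\<forall>Q\<in>SO3. W10 R D \<le> W10 Q D) \<longrightarrow>
                W10 R D = (l3 - 1)^2 + (1/2) * (l1 - l2)^2)"
      using set val unfolding Let_def k_def[symmetric] r1_def r2_def Wmin_def by blast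
  qed
  have part3: "l1 + l2 \<le> 2 \<longrightarrow> {R \<in> SO3. \<forall>Q\<in>SO3. W10 R D \<le> W10 Q D} = {mat 1}"
  proof
    assume sg: "l1 + l2 \<le> 2"
    have Ir: "mat 1 = rot3 1 0"
      unfolding mat_def rot3_def vec_eq_iff forall_3 by simp
    have ISO: "(mat 1 :: mat3) \<in> SO3" unfolding Ir by (rule rot3_SO3) simp
    define Wid where "Wid = (l1-1)^2+(l2-1)^2+(l3 - 1)^2"
    have WI: "W10 (mat 1) D = Wid"
    proof -
      have "W10 (mat 1) D = Phi l1 l2 l3 1 1 1"
        unfolding D_def W_Phi[OF ISO] unfolding Ir rot3_def by simp
      also have "\<dots> = Wid"
        using id_iii[of 1 0 0 0 l1 l2 l3] unfolding Wid_def by simp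
      finally show ?thesis .
    qed
    have lower: "Wid \<le> W10 R D \<and> (W10 R D \<le> Wid \<longrightarrow> R = mat 1)" if R: "R \<in> SO3" for R
    proof -
      obtain qa qb qc qd where q: "qa \<ge> 0" "qb \<ge> 0" "qc \<ge> 0" "qd \<ge> 0" "qa+qb+qc+qd = 1"
        "R$1$1 = qa+qb-qc-qd" "R$2$2 = qa-qb+qc-qd" "R$3$3 = qa-qb-qc+qd"
        "W10 R D = Phi l1 l2 l3 (qa+qb-qc-qd) (qa-qb+qc-qd) (qa-qb-qc+qd)"
        using core[OF R] unfolding D_def by metis
      define K1 where "K1 = (l1+l3)^2+(l2+l3)^2-(l1-l2)^2"
      define K2 where "K2 = (l2+l3)^2+(l1+l2)^2-(l1-l3)^2"
      define K3 where "K3 = (l1+l3)^2+(l1+l2)^2-(l2-l3)^2"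
      have idn: "W10 R D - Wid = 2*(l2+l3)*(2-(l2+l3))*qb + 2*(l1+l3)*(2-(l1+l3))*qc + 2*(l1+l2)*(2-(l1+l2))*qd
         + 2*(qb^2*(l2+l3)^2 + qc^2*(l1+l3)^2 + qd^2*(l1+l2)^2 + qb*qc*K1 + qb*qd*K2 + qc*qd*K3)"
        unfolding q(9) Wid_def K1_def K2_def K3_def using id_iii[OF q(5)] by simp
      have "(l1-l2)^2 \<le> (l1+l3)^2" using lp by (intro power_mono) auto
      hence K1n: "0 \<le> K1" unfolding K1_def using zero_le_power2[of "l2+l3"] by linarith
      have "(l1-l3)^2 \<le> (l1+l2)^2" using lp by (intro power_mono) auto
      hence K2n: "0 \<le> K2" unfolding K2_def using zero_le_power2[of "l2+l3"] by linarith
      have "(l2-l3)^2 \<le> (l1+l3)^2" using lp by (intro power_mono) auto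
      hence K3n: "0 \<le> K3" unfolding K3_def using zero_le_power2[of "l1+l2"] by linarith
      have cb: "0 < 2*(l2+l3)*(2-(l2+l3))" using lp sg by (intro mult_pos_pos) auto
      have cc: "0 < 2*(l1+l3)*(2-(l1+l3))" using lp sg by (intro mult_pos_pos) auto
      have cd: "0 \<le> 2*(l1+l2)*(2-(l1+l2))" using lp sg by (intro mult_nonneg_nonneg) auto
      have tb: "0 \<le> 2*(l2+l3)*(2-(l2+l3))*qb" using cb q(2) by simp
      have tc: "0 \<le> 2*(l1+l3)*(2-(l1+l3))*qc" using cc q(3) by simp
      have td: "0 \<le> 2*(l1+l2)*(2-(l1+l2))*qd" using cd q(4) by simp
      define Sq where "Sq = qb^2*(l2+l3)^2 + qc^2*(l1+l3)^2 + qb*qc*K1 + qb*qd*K2 + qc*qd*K3"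
      have spl: "2*(qb^2*(l2+l3)^2 + qc^2*(l1+l3)^2 + qd^2*(l1+l2)^2 + qb*qc*K1 + qb*qd*K2 + qc*qd*K3)
          = 2*Sq + 2*(qd^2*(l1+l2)^2)" unfolding Sq_def by (simp add: algebra_simps)
      have Sqn: "0 \<le> Sq" unfolding Sq_def
        using q(1-4) K1n K2n K3n by (intro mult_nonneg_nonneg add_nonneg_nonneg) auto
      have tq2: "0 \<le> qd^2*(l1+l2)^2" by simp
      have ge: "Wid \<le> W10 R D" using idn spl tb tc td Sqn tq2 by linarith
      moreover have "R = mat 1" if le: "W10 R D \<le> Wid"
      proof -
        have z: "2*(l2+l3)*(2-(l2+l3))*qb = 0" "2*(l1+l3)*(2-(l1+l3))*qc = 0"
          "qd^2*(l1+l2)^2 = 0"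
          using idn spl tb tc td Sqn tq2 le by linarith+
        have zb1: "qb = 0" using z(1) cb by (metis mult_eq_0_iff order_less_irrefl)
        have zb2: "qc = 0" using z(2) cc by (metis mult_eq_0_iff order_less_irrefl)
        note zb = zb1 zb2
        have "qd = 0" using z(3) lp by simp
        hence d: "R$1$1 = 1" "R$2$2 = 1" "R$3$3 = 1" using q(5-8) zb by simp_all
        note rc = recon[OF R d]
        have "R$2$1 = 0" using rc(2) by simp
        thus ?thesis using rc(1) Ir by simp
      qed
      ultimately show ?thesis by blast
    qed
    show "{R \<in> SO3. \<forall>Q\<in>SO3. W10 R D \<le> W10 Q D} = {mat 1}"
    proof
      show "{R \<in> SO3. \<forall>Q\<in>SO3. W10 R D \<le> W10 Q D} \<subseteq> {mat 1}"
      proof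
        fix R assume "R \<in> {R \<in> SO3. \<forall>Q\<in>SO3. W10 R D \<le> W10 Q D}"
        hence R: "R \<in> SO3" "W10 R D \<le> W10 (mat 1) D" using ISO by auto
        have "R = mat 1" using lower[OF R(1)] R(2) WI by simp
        thus "R \<in> {mat 1}" by simp
      qed
      have "\<forall>Q\<in>SO3. Wid \<le> W10 Q D" using lower by blast
      thus "{mat 1} \<subseteq> {R \<in> SO3. \<forall>Q\<in>SO3. W10 R D \<le> W10 Q D}"
        using ISO WI by simp
    qed
  qed
  have p1: "diag3 (-1) (-1) 1 \<in> SO3 \<and>
          (\<forall>R\<in>SO3. R \<noteq> diag3 (-1) (-1) 1 \<longrightarrow> W10 R D < W10 (diag3 (-1) (-1) 1) D)"
    using MSO part1 unfolding M_def by simp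
  show ?thesis by (rule conjI[OF p1 conjI[OF part2 part3]])
qed

end
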